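(* Let $\bar A=\{A_i\}$ be a partition with $A_i\in(P_i,Q_i)$ such that every $A_i$ satisfies the short cycle property, i.e. $T_iA_i\in(Q_{\rho(i)},A_{\rho(i)+1})$ and $T_{i-1}A_i\in(A_{\theta(i-1)},P_{\theta(i-1)+1})$. Put $B_i=T_{\sigma(i-1)}A_{\sigma(i-1)}$ and $C_i=T_{\sigma(i+1)}A_{\sigma(i+1)+1}$. Then for indices $i,j$ related by $\sigma(j+1)=\sigma(i-1)-1$, \[ T_jC_j=T_iB_i\in[B_{\rho(i)+1},C_{\theta(i)}]=[B_{\rho(j)},C_{\theta(j)-1}]. \]
   Context: Setting. Fix $g\ge 2$; indices are mod $8g-4$. Let $\mathcal F$ be the regular hyperbolic $(8g-4)$-gon in the unit disk centered at $0$ with all interior angles $\pi/2$, sides labeled $1,\dots,8g-4$ counterclockwise, side $i$ joining vertices $V_i$ and $V_{i+1}$. The complete geodesic extending side $i$ goes from $P_i$ (beyond $V_i$) to $Q_{i+1}$ (beyond $V_{i+1}$) on the unit circle; counterclockwise order $P_1,Q_1,P_2,Q_2,\dots,P_{8g-4},Q_{8g-4}$. $\sigma(i)=4g-i$ ($i$ odd), $\sigma(i)=2-i$ ($i$ even), $\rho(i)=\sigma(i)+1$, $\theta(i)=\sigma(i)-1$. $T_i$ is the Möbius transformation mapping side $i$ onto side $\sigma(i)$, with isometric circle the geodesic $P_iQ_{i+1}$, mapped onto the geodesic $Q_{\sigma(i)+1}P_{\sigma(i)}$, inside to outside. Arcs $[A,B]$ etc. are counterclockwise from $A$ to $B$.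 *)

theory Defs
  imports Complex_Main
begin

text \<open>Number of sides N = 8g - 4 of the regular fundamental polygon.\<close>
definition NN :: "nat \<Rightarrow> int" where
  "NN g = 8 * int g - 4"

text \<open>Half angular width of the (Euclidean) arc of the unit circle cut off by the geodesic
  extending a side. For a regular N-gon centred at 0 with interior angles pi/2, adjacent side
  geodesics are orthogonal, which gives sin alpha = sqrt 2 * sin (pi/N).\<close>
definition alpha :: "nat \<Rightarrow> real" where
  "alpha g = arcsin (sqrt 2 * sin (pi / real_of_int (NN g)))"

text \<open>Direction (argument) of the midpoint of side k (a fixed choice of rotation).\<close>
definition mid :: "nat \<Rightarrow> int \<Rightarrow> real" where
  "mid g k = 2 * pi * real_of_int k / real_of_int (NN g)"

text \<open>Endpoints of the geodesic extending side k: from P_k (beyond V_k) to Q_(k+1) (beyond V_(k+1)).\<close>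
definition Pt :: "nat \<Rightarrow> int \<Rightarrow> complex" where
  "Pt g k = cis (mid g k - alpha g)"

definition Qt :: "nat \<Rightarrow> int \<Rightarrow> complex" where
  "Qt g k = cis (mid g (k - 1) + alpha g)"

definition sigma :: "nat \<Rightarrow> int \<Rightarrow> int" where
  "sigma g i = (if odd i then 4 * int g - i else 2 - i)"

definition rho :: "nat \<Rightarrow> int \<Rightarrow> int" where
  "rho g i = sigma g i + 1"

definition theta :: "nat \<Rightarrow> int \<Rightarrow> int" where
  "theta g i = sigma g i - 1"

text \<open>Euclidean centre of the isometric circle (geodesic P_k Q_(k+1)); its radius is tan alpha.\<close>
definition ctr :: "nat \<Rightarrow> int \<Rightarrow> complex" where
  "ctr g k = complex_of_real (1 / cos (alpha g)) * cis (mid g k)"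

text \<open>The generator T_i: inversion in its isometric circle (geodesic P_i Q_(i+1)), followed by
  the reflection in the line through 0 which exchanges the directions of sides i and sigma(i).
  This is the unique Moebius transformation with isometric circle P_i Q_(i+1) mapped onto
  Q_(sigma i + 1) P_(sigma i) (P_i to Q_(sigma i +1)), mapping side i onto side sigma(i).\<close>
definition Tm :: "nat \<Rightarrow> int \<Rightarrow> complex \<Rightarrow> complex" where
  "Tm g i z = cis (mid g i + mid g (sigma g i)) *
      (cnj (ctr g i) + complex_of_real ((tan (alpha g))\<^sup>2) / (z - ctr g i))"

definition ccw_angle :: "complex \<Rightarrow> complex \<Rightarrow> real" where
  "ccw_angle A B = (if Arg (B / A) < 0 then Arg (B / A) + 2 * pi else Arg (B / A))"

definition arc_closed :: "complex \<Rightarrow> complex \<Rightarrow> complex set" where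
  "arc_closed A B = {A * cis t | t. 0 \<le> t \<and> t \<le> ccw_angle A B}"

definition arc_open :: "complex \<Rightarrow> complex \<Rightarrow> complex set" where
  "arc_open A B = {A * cis t | t. 0 < t \<and> t < ccw_angle A B}"

definition Bpt :: "nat \<Rightarrow> (int \<Rightarrow> complex) \<Rightarrow> int \<Rightarrow> complex" where
  "Bpt g A i = Tm g (sigma g (i - 1)) (A (sigma g (i - 1)))"

definition Cpt :: "nat \<Rightarrow> (int \<Rightarrow> complex) \<Rightarrow> int \<Rightarrow> complex" where
  "Cpt g A i = Tm g (sigma g (i + 1)) (A (sigma g (i + 1) + 1))"

end

theory Submission imports Defs "HOL-Library.Real_Mod" begin


definition dd :: "nat \<Rightarrow> real" where "dd g = 2 * pi / real_of_int (NN g)"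
definition kk :: "nat \<Rightarrow> real" where "kk g = 1 / cos (alpha g)"

lemma NN_ge: "g \<ge> 2 \<Longrightarrow> NN g \<ge> 12" by (simp add: NN_def)

lemma dd_pos: "g \<ge> 2 \<Longrightarrow> 0 < dd g"
  using NN_ge[of g] by (simp add: dd_def)

lemma dd_le: "g \<ge> 2 \<Longrightarrow> dd g \<le> pi / 6"
proof -
  assume g: "g \<ge> 2"
  have "real_of_int (NN g) \<ge> 12" using NN_ge[OF g] by linarith
  then show ?thesis unfolding dd_def using pi_gt_zero by (simp add: field_simps)
qed

lemma mid_dd: "mid g k = real_of_int k * dd g"
  by (simp add: mid_def dd_def)

lemma alpha_facts:
  assumes g: "g \<ge> 2"
  shows "dd g / 2 < alpha g" "alpha g < dd g" "alpha g < pi / 2" "0 < alpha g"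
    "cos (alpha g) > 0" "(cos (alpha g))\<^sup>2 = cos (dd g)"
    "sin (alpha g) = sqrt 2 * sin (dd g / 2)"
proof -
  define d where "d = dd g"
  have d0: "0 < d" and d6: "d \<le> pi/6" using dd_pos[OF g] dd_le[OF g] by (auto simp: d_def)
  have aeq: "alpha g = arcsin (sqrt 2 * sin (d/2))"
    by (simp add: alpha_def d_def dd_def)
  have s0: "0 < sin (d/2)" using d0 d6 by (intro sin_gt_zero) auto
  have "sin (d/2) < sin (pi/4)" using d0 d6 by (intro sin_monotone_2pi) auto
  hence h: "2 * sin (d/2) < sqrt 2" by (simp add: sin_45 field_simps)
  have "sqrt 2 * (2 * sin (d/2)) < sqrt 2 * sqrt 2" using h by (intro mult_strict_left_mono) auto
  hence s1: "sqrt 2 * sin (d/2) < 1" by simp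
  have cd: "cos (d/2) > cos (pi/4)" using d0 d6 by (intro cos_monotone_0_pi) auto
  hence h2: "sqrt 2 < 2 * cos (d/2)" by (simp add: cos_45 field_simps)
  have "sqrt 2 * sqrt 2 < sqrt 2 * (2 * cos (d/2))" using h2 by (intro mult_strict_left_mono) auto
  hence cd2: "sqrt 2 * cos (d/2) > 1" by simp
  let ?S = "sqrt 2 * sin (d/2)"
  have S0: "0 < ?S" using s0 by simp
  have sa: "sin (alpha g) = ?S" using aeq S0 s1 by simp
  have ab: "- (pi/2) \<le> alpha g \<and> alpha g \<le> pi/2" using aeq S0 s1 arcsin_bounded[of ?S] by simp
  have a0: "0 < alpha g"
  proof (rule ccontr)
    assume "\<not> 0 < alpha g"
    hence "sin (alpha g) \<le> 0" using ab using sin_ge_zero[of "- alpha g"] by auto  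
    thus False using sa S0 by simp
  qed
  have api: "alpha g < pi/2"
  proof (rule ccontr)
    assume "\<not> alpha g < pi/2" hence "alpha g = pi/2" using ab by simp
    hence "sin (alpha g) = 1" by (metis sin_pi_half)
    thus False using sa s1 by simp
  qed
  have sgt: "sin (d/2) < sin (alpha g)" using sa s0 by (simp add: mult_less_cancel_right1 del: sin_gt_zero)
  show "d/2 < alpha g"
  proof (rule ccontr)
    assume "\<not> d/2 < alpha g"
    hence "sin (alpha g) \<le> sin (d/2)" using a0 d0 d6 by (intro sin_mono_le_eq[THEN iffD2]) auto
    thus False using sgt by simp
  qed
  have "sin d = 2 * sin (d/2) * cos (d/2)" using sin_double[of "d/2"] by simp
  hence "sin (alpha g) < sin d" using sa s0 h2 by (simp add: mult_strict_left_mono) 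
  show "alpha g < d"
  proof (rule ccontr)
    assume "\<not> alpha g < d"
    hence "sin d \<le> sin (alpha g)" using a0 d0 d6 api by (intro sin_mono_le_eq[THEN iffD2]) auto
    thus False using \<open>sin (alpha g) < sin d\<close> by simp
  qed
  show "alpha g < pi/2" "0 < alpha g" by fact+
  show "cos (alpha g) > 0" using a0 api by (intro cos_gt_zero) auto
  have "(cos (alpha g))\<^sup>2 = 1 - (sin (alpha g))\<^sup>2" by (simp add: cos_squared_eq)
  also have "\<dots> = 1 - 2 * (sin (d/2))\<^sup>2" using sa by (simp add: power_mult_distrib)
  also have "\<dots> = cos d" using cos_double_sin[of "d/2"] by simp
  finally show "(cos (alpha g))\<^sup>2 = cos (dd g)" by (simp add: d_def)
  show "sin (alpha g) = sqrt 2 * sin (dd g / 2)" using sa by (simp add: d_def)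
qed



lemma Arg_cis_in: "-pi < x \<Longrightarrow> x \<le> pi \<Longrightarrow> Arg (cis x) = x"
  by (rule cis_Arg_unique) (auto simp: sgn_div_norm)

lemma ccw_cis: assumes "a < b" "b < a + 2*pi" shows "ccw_angle (cis a) (cis b) = b - a"
proof -
  have q: "cis b / cis a = cis (b - a)" by (simp add: cis_divide)
  show ?thesis
  proof (cases "b - a \<le> pi")
    case True
    hence "Arg (cis (b-a)) = b - a" using assms by (intro Arg_cis_in) auto
    thus ?thesis using q assms by (simp add: ccw_angle_def)
  next
    case False
    have "cis (b - a) = cis (b - a - 2*pi)" by (simp add: cis_divide[symmetric])
    moreover have "Arg (cis (b-a-2*pi)) = b - a - 2*pi" using assms False by (intro Arg_cis_in) auto
    ultimately show ?thesis using q False assms by (simp add: ccw_angle_def)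
  qed
qed

lemma arc_open_cis: assumes "a < b" "b < a + 2*pi"
  shows "z \<in> arc_open (cis a) (cis b) \<longleftrightarrow> (\<exists>t. a < t \<and> t < b \<and> z = cis t)"
proof
  assume "z \<in> arc_open (cis a) (cis b)"
  then obtain t where "z = cis a * cis t" "0 < t" "t < b - a"
    unfolding arc_open_def ccw_cis[OF assms] by auto
  thus "\<exists>t. a < t \<and> t < b \<and> z = cis t" by (intro exI[of _ "a+t"]) (auto simp: cis_mult)
next
  assume "\<exists>t. a < t \<and> t < b \<and> z = cis t"
  then obtain t where "a < t" "t < b" "z = cis t" by auto
  thus "z \<in> arc_open (cis a) (cis b)" unfolding arc_open_def ccw_cis[OF assms]
    by (auto intro!: exI[of _ "t - a"] simp: cis_mult)
qed

lemma arc_closed_cis: assumes "a < b" "b < a + 2*pi"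
  shows "z \<in> arc_closed (cis a) (cis b) \<longleftrightarrow> (\<exists>t. a \<le> t \<and> t \<le> b \<and> z = cis t)"
proof
  assume "z \<in> arc_closed (cis a) (cis b)"
  then obtain t where "z = cis a * cis t" "0 \<le> t" "t \<le> b - a"
    unfolding arc_closed_def ccw_cis[OF assms] by auto
  thus "\<exists>t. a \<le> t \<and> t \<le> b \<and> z = cis t" by (intro exI[of _ "a+t"]) (auto simp: cis_mult)
next
  assume "\<exists>t. a \<le> t \<and> t \<le> b \<and> z = cis t"
  then obtain t where "a \<le> t" "t \<le> b" "z = cis t" by auto
  thus "z \<in> arc_closed (cis a) (cis b)" unfolding arc_closed_def ccw_cis[OF assms]
    by (auto intro!: exI[of _ "t - a"] simp: cis_mult)
qed

lemma cis_inj: assumes "cis u = cis v" "\<bar>u - v\<bar> < 2*pi" shows "u = v"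
proof -
  have "cis (u - v) = 1" using assms by (simp add: cis_divide[symmetric])
  then obtain n where n: "u - v = of_int n * (2*pi)" by (auto simp: cis_eq_1_iff)
  have "\<bar>of_int n\<bar> * (2*pi) < 1 * (2*pi)" using assms(2) n by (simp add: abs_mult)
  hence "\<bar>real_of_int n\<bar> < 1" by (simp only: mult_less_cancel_right) auto
  hence "n = 0" by linarith
  thus ?thesis using n by simp
qed

definition Wf :: "complex \<Rightarrow> complex \<Rightarrow> complex \<Rightarrow> complex" where
  "Wf a z b = (z - a) * (b - z) * (b - a) / (a * z * b)"

lemma ccw_unit: assumes "norm a = 1" "norm w = 1"
  shows "w = a * cis (ccw_angle a w)" "0 \<le> ccw_angle a w" "ccw_angle a w < 2*pi"
proof -
  have a0: "a \<noteq> 0" "w \<noteq> 0" using assms by auto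
  have n: "norm (w / a) = 1" using assms by (simp add: norm_divide)
  have "cis (Arg (w/a)) = w / a" using a0 n by (simp add: cis_Arg sgn_div_norm)
  moreover have "cis (ccw_angle a w) = cis (Arg (w/a))"
    by (simp add: ccw_angle_def cis_mult[symmetric])
  ultimately show "w = a * cis (ccw_angle a w)" using a0 by simp
  show "0 \<le> ccw_angle a w" "ccw_angle a w < 2*pi"
    using Arg_bounded[of "w/a"] pi_gt_zero by (auto simp: ccw_angle_def)
qed

lemma cis_m1: "cis (2*p) - 1 = 2 * \<i> * complex_of_real (sin p) * cis p"
proof -
  have c: "cos (2*p) = 1 - 2*(sin p)^2" by (rule cos_double_sin)
  have s: "sin (2*p) = 2 * sin p * cos p" by (rule sin_double)
  show ?thesis using c s by (simp add: complex_eq_iff power2_eq_square algebra_simps)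
qed

lemma Wf_cis: assumes "a \<noteq> 0"
  shows "Wf a (a * cis t) (a * cis s) = - 8 * \<i> * complex_of_real (sin (t/2) * sin ((s-t)/2) * sin (s/2))"
proof -
  have e1: "cis t - 1 = 2 * \<i> * complex_of_real (sin (t/2)) * cis (t/2)" using cis_m1[of "t/2"] by simp
  have e3: "cis s - 1 = 2 * \<i> * complex_of_real (sin (s/2)) * cis (s/2)" using cis_m1[of "s/2"] by simp
  have "cis s - cis t = cis t * (cis (s - t) - 1)" by (simp add: algebra_simps cis_mult)
  also have "\<dots> = cis t * (2 * \<i> * complex_of_real (sin ((s-t)/2)) * cis ((s-t)/2))"
  proof -
    have h: "2*((s-t)/2) = s - t" by simp
    show ?thesis using cis_m1[of "(s-t)/2"] unfolding h by simp
  qed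
  finally have e2: "cis s - cis t = cis t * (2 * \<i> * complex_of_real (sin ((s-t)/2)) * cis ((s-t)/2))" .
  have "Wf a (a * cis t) (a * cis s) = (cis t - 1) * (cis s - cis t) * (cis s - 1) / (cis t * cis s)"
    unfolding Wf_def using assms by (simp add: field_simps)
  also have "\<dots> = (2 * \<i> * complex_of_real (sin (t/2)) * cis (t/2)) *
      (cis t * (2 * \<i> * complex_of_real (sin ((s-t)/2)) * cis ((s-t)/2))) *
      (2 * \<i> * complex_of_real (sin (s/2)) * cis (s/2)) / (cis t * cis s)"
    by (simp only: e1 e2 e3)
  also have "\<dots> = - 8 * \<i> * complex_of_real (sin (t/2) * sin ((s-t)/2) * sin (s/2)) *
      (cis (t/2) * cis ((s-t)/2) * cis (s/2) / cis s)"
    by (simp add: field_simps)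
  also have "cis (t/2) * cis ((s-t)/2) * cis (s/2) / cis s = 1"
  proof -
    have h: "t/2 + (s-t)/2 - s/2 = 0" by (simp add: field_simps)
    have "cis (t/2 + (s-t)/2 - s/2) = 1" by (subst h) simp
    thus ?thesis by (simp add: cis_mult cis_divide)
  qed
  finally show ?thesis by simp
qed

lemma arc_open_W: assumes "norm a = 1" "norm b = 1" "norm z = 1"
  shows "z \<in> arc_open a b \<longleftrightarrow> Im (Wf a z b) < 0"
proof
  assume "z \<in> arc_open a b"
  then obtain t where t: "z = a * cis t" "0 < t" "t < ccw_angle a b" unfolding arc_open_def by auto
  have s: "b = a * cis (ccw_angle a b)" "ccw_angle a b < 2*pi" using ccw_unit[OF assms(1,2)] by auto
  define s' where "s' = ccw_angle a b"
  have "a \<noteq> 0" using assms by auto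
  have "Im (Wf a z b) = - 8 * (sin (t/2) * sin ((s'-t)/2) * sin (s'/2))"
    using Wf_cis[OF \<open>a \<noteq> 0\<close>, of t s'] t(1) s(1) by (simp add: s'_def)
  moreover have "0 < sin (t/2)" "0 < sin ((s'-t)/2)" "0 < sin (s'/2)"
    using t s by (auto intro!: sin_gt_zero simp: s'_def)
  ultimately show "Im (Wf a z b) < 0" by (simp add: mult_pos_pos)
next
  assume W: "Im (Wf a z b) < 0"
  have a0: "a \<noteq> 0" using assms by auto
  define t where "t = ccw_angle a z"
  define s where "s = ccw_angle a b"
  have tz: "z = a * cis t" "0 \<le> t" "t < 2*pi" using ccw_unit[OF assms(1,3)] by (auto simp: t_def)
  have sb: "b = a * cis s" "0 \<le> s" "s < 2*pi" using ccw_unit[OF assms(1,2)] by (auto simp: s_def)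
  have "Im (Wf a z b) = - 8 * (sin (t/2) * sin ((s-t)/2) * sin (s/2))"
    using Wf_cis[OF a0, of t s] tz sb by simp
  hence P: "0 < sin (t/2) * sin ((s-t)/2) * sin (s/2)" using W by linarith
  have st: "0 \<le> sin (t/2)" "0 \<le> sin (s/2)" using tz sb by (auto intro!: sin_ge_zero)
  have t0: "sin (t/2) \<noteq> 0" and s0: "sin (s/2) \<noteq> 0" using P by auto
  have "0 < sin (t/2)" "0 < sin (s/2)" using st t0 s0 by auto
  hence "0 < sin ((s-t)/2)" using P by (metis mult_pos_pos zero_less_mult_pos2 mult.commute zero_less_mult_iff)
  have "t \<noteq> 0" using t0 by auto
  have "t < s"
  proof (rule ccontr)
    assume "\<not> t < s"
    hence "sin ((t - s)/2) \<ge> 0" using tz sb by (intro sin_ge_zero) auto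
    hence "sin ((s - t)/2) \<le> 0" using sin_minus[of "(t-s)/2"] by (simp add: minus_divide_left)
    thus False using \<open>0 < sin ((s-t)/2)\<close> by simp
  qed
  thus "z \<in> arc_open a b" unfolding arc_open_def using tz \<open>t \<noteq> 0\<close> by (auto simp: s_def)
qed



definition Mob :: "complex \<Rightarrow> complex \<Rightarrow> complex \<Rightarrow> complex" where
  "Mob e c z = e * (cnj c * z - 1) / (z - c)"

lemma unit_ne: assumes "norm c > 1" "norm x = 1" shows "x - c \<noteq> 0" "cnj c * x - 1 \<noteq> 0"
proof -
  show "x - c \<noteq> 0" using assms by auto
  have "norm (cnj c * x) = norm c" using assms by (simp add: norm_mult)
  thus "cnj c * x - 1 \<noteq> 0" using assms by auto
qed

lemma Mob_unit: assumes "norm c > 1" "norm e = 1" "norm z = 1" shows "norm (Mob e c z) = 1"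
proof -
  have "cnj c * z - 1 = z * cnj (c - z)"
    using assms(3) by (simp add: algebra_simps complex_norm_square[symmetric])
  hence "norm (cnj c * z - 1) = norm z * norm (cnj (c - z))" by (simp only: norm_mult)
  hence "norm (cnj c * z - 1) = norm (z - c)" using assms(3)
    by (simp only: complex_mod_cnj norm_minus_commute)
  thus ?thesis using assms unit_ne[OF assms(1,3)] by (simp add: Mob_def norm_mult norm_divide)
qed

lemma Mob_W_step1:
  assumes "a \<noteq> 0" "z \<noteq> 0" "b \<noteq> 0" "e \<noteq> 0"
    "a - c \<noteq> 0" "z - c \<noteq> 0" "b - c \<noteq> 0"
    "cc * a - 1 \<noteq> 0" "cc * z - 1 \<noteq> 0" "cc * b - 1 \<noteq> 0"
  shows "Wf (e * (cc * a - 1) / (a - c)) (e * (cc * z - 1) / (z - c)) (e * (cc * b - 1) / (b - c))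
    = Wf a z b * (- ((cc * c - 1)^3 * a * z * b) /
        ((a - c) * (cc * a - 1) * (z - c) * (cc * z - 1) * (b - c) * (cc * b - 1)))"
proof -
  have d: "e * (cc * y - 1) / (y - c) - e * (cc * x - 1) / (x - c)
      = e * (cc * c - 1) * (x - y) / ((y - c) * (x - c))" if "x - c \<noteq> 0" "y - c \<noteq> 0" for x y
    using that by (simp add: field_simps)
  show ?thesis
    unfolding Wf_def using assms
    apply (simp add: d)
    apply (simp add: divide_simps)
    apply algebra
    done
qed

lemma unit_prod: assumes "norm x = 1"
  shows "(x - c) * (cnj c * x - 1) = - x * complex_of_real ((norm (1 - cnj c * x))^2)"
proof -
  have xx: "x * cnj x = 1" using assms by (simp add: complex_norm_square[symmetric])
  have h: "complex_of_real ((norm (1 - cnj c * x))^2) = (1 - cnj c * x) * (1 - c * cnj x)"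
    by (subst complex_norm_square) simp
  show ?thesis unfolding h using xx by algebra
qed

lemma Mob_orient:
  assumes c: "norm c > 1" and e: "norm e = 1" and u: "norm a = 1" "norm z = 1" "norm b = 1"
    and W: "Im (Wf a z b) < 0"
  shows "Im (Wf (Mob e c a) (Mob e c z) (Mob e c b)) < 0"
proof -
  note ne = unit_ne[OF c]
  have nz: "a \<noteq> 0" "z \<noteq> 0" "b \<noteq> 0" "e \<noteq> 0" using u e by auto
  note s1 = Mob_W_step1[OF nz ne(1)[OF u(1)] ne(1)[OF u(2)] ne(1)[OF u(3)]
      ne(2)[OF u(1)] ne(2)[OF u(2)] ne(2)[OF u(3)]]
  define na where "na = (norm (1 - cnj c * a))^2"
  define nzz where "nzz = (norm (1 - cnj c * z))^2"
  define nb where "nb = (norm (1 - cnj c * b))^2"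
  have pos: "na > 0" "nzz > 0" "nb > 0"
    using ne(2)[OF u(1)] ne(2)[OF u(2)] ne(2)[OF u(3)] by (auto simp: na_def nzz_def nb_def)
  have cc: "cnj c * c - 1 = complex_of_real ((norm c)^2 - 1)"
    by (simp only: of_real_diff complex_norm_square) (simp add: mult.commute)
  have F: "- ((cnj c * c - 1)^3 * a * z * b) /
        ((a - c) * (cnj c * a - 1) * (z - c) * (cnj c * z - 1) * (b - c) * (cnj c * b - 1))
      = complex_of_real (((norm c)^2 - 1)^3 / (na * nzz * nb))"
  proof -
    have "(a - c) * (cnj c * a - 1) * (z - c) * (cnj c * z - 1) * (b - c) * (cnj c * b - 1)
        = ((a - c) * (cnj c * a - 1)) * ((z - c) * (cnj c * z - 1)) * ((b - c) * (cnj c * b - 1))"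
      by (simp add: ac_simps)
    also have "\<dots> = - (a * z * b) * complex_of_real (na * nzz * nb)"
      unfolding unit_prod[OF u(1)] unit_prod[OF u(2)] unit_prod[OF u(3)] na_def nzz_def nb_def
      by (simp add: algebra_simps)
    finally have D: "(a - c) * (cnj c * a - 1) * (z - c) * (cnj c * z - 1) * (b - c) * (cnj c * b - 1)
        = - (a * z * b) * complex_of_real (na * nzz * nb)" .
    show ?thesis unfolding D cc using nz pos by (simp add: field_simps)
  qed
  have "Wf (Mob e c a) (Mob e c z) (Mob e c b) = Wf a z b * complex_of_real (((norm c)^2 - 1)^3 / (na * nzz * nb))"
    unfolding Mob_def s1 F ..
  hence "Im (Wf (Mob e c a) (Mob e c z) (Mob e c b)) = Im (Wf a z b) * (((norm c)^2 - 1)^3 / (na * nzz * nb))"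
    by simp
  moreover have "((norm c)^2 - 1)^3 / (na * nzz * nb) > 0"
  proof -
    have "(norm c)^2 > 1" using c by (simp add: one_less_power)
    thus ?thesis using pos by simp
  qed
  ultimately show ?thesis using W mult_neg_pos[of "Im (Wf a z b)" "((norm c)^2 - 1)^3 / (na * nzz * nb)"]
    by (simp only:)
qed

lemma Mob_arc:
  assumes c: "norm c > 1" and e: "norm e = 1" and u: "norm a = 1" "norm z = 1" "norm b = 1"
    and z: "z \<in> arc_open a b"
  shows "Mob e c z \<in> arc_open (Mob e c a) (Mob e c b)"
proof -
  have "Im (Wf a z b) < 0" using z arc_open_W[OF u(1,3,2)] by simp
  hence "Im (Wf (Mob e c a) (Mob e c z) (Mob e c b)) < 0" by (rule Mob_orient[OF c e u])
  thus ?thesis using arc_open_W Mob_unit[OF c e] u by simp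
qed



definition M3 :: "complex \<Rightarrow> complex \<Rightarrow> complex \<Rightarrow> complex \<Rightarrow> complex" where
  "M3 e c cb z = e * (cb * z - 1) / (z - c)"

lemma group_alg:
  fixes u ub om omb K eps w :: complex
  assumes uu: "u * ub = 1" and oo: "om * omb = 1" and KK: "K^2 * (om + omb) = 2" and ee: "eps^2 = 1"
    and d1: "w - K * (- eps * om^2 * ub) \<noteq> 0"
    and d2: "M3 (eps * om^2) (K * (- eps * om^2 * ub)) (K * (- eps * omb^2 * u)) w - K * (- u * omb) \<noteq> 0"
    and d3: "w - K * (- eps * om^3 * ub) \<noteq> 0"
    and d4: "M3 (- eps * om^2) (K * (- eps * om^3 * ub)) (K * (- eps * omb^3 * u)) w - K * u \<noteq> 0"
  shows "M3 (- eps * om^2) (K * (- u * omb)) (K * (- ub * om))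
           (M3 (eps * om^2) (K * (- eps * om^2 * ub)) (K * (- eps * omb^2 * u)) w)
       = M3 (eps * om^2) (K * u) (K * ub)
           (M3 (- eps * om^2) (K * (- eps * om^3 * ub)) (K * (- eps * omb^3 * u)) w)"
proof -
  have d2': "eps * om^2 * (K * (- eps * omb^2 * u) * w - 1) - K * (- u * omb) * (w - K * (- eps * om^2 * ub)) \<noteq> 0"
    using d1 d2 unfolding M3_def by (simp add: field_simps)
  have d4': "- eps * om^2 * (K * (- eps * omb^3 * u) * w - 1) - K * u * (w - K * (- eps * om^3 * ub)) \<noteq> 0"
    using d3 d4 unfolding M3_def by (simp add: field_simps)
  show ?thesis
    unfolding M3_def using d1 d3 d2' d4'
    apply (simp add: divide_simps)
    using uu oo KK ee
    apply algebra
    done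
qed



lemma fix_algQ:
  fixes u ub om omb K eps ec ecb :: complex
  assumes uu: "u * ub = 1" and oo: "om * omb = 1" and KK: "K^2 * (om + omb) = 2" and ee: "eps^2 = 1"
    and cc: "ec * ecb = 1" and Kc: "K * (ec + ecb) = 2"
    and d1: "u * omb * ec - K * u \<noteq> 0"
  shows "M3 (eps * om^2) (K * u) (K * ub) (u * omb * ec) = eps * om^3 * ub * ec"
    unfolding M3_def using d1 apply (simp add: divide_simps)
    using uu oo KK ee cc Kc by algebra

lemma fix_algP:
  fixes u ub om omb K eps ec ecb :: complex
  assumes uu: "u * ub = 1" and oo: "om * omb = 1" and KK: "K^2 * (om + omb) = 2" and ee: "eps^2 = 1"
    and cc: "ec * ecb = 1" and Kc: "K * (ec + ecb) = 2"
    and d2: "u * om * ecb - K * u \<noteq> 0"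
  shows "M3 (eps * om^2) (K * u) (K * ub) (u * om * ecb) = eps * om * ub * ecb"
    unfolding M3_def using d2 apply (simp add: divide_simps)
    using uu oo KK ee cc Kc by algebra



definition om :: "nat \<Rightarrow> complex" where "om g = cis (dd g)"
definition ec :: "nat \<Rightarrow> complex" where "ec g = cis (alpha g)"
definition epsi :: "int \<Rightarrow> complex" where "epsi m = (if odd m then -1 else 1)"

lemma epsi_sq: "(epsi m)^2 = 1" by (simp add: epsi_def)

lemma kk_gt1: assumes g: "g \<ge> 2" shows "kk g > 1"
proof -
  have "cos (alpha g) < cos 0" using alpha_facts[OF g] by (intro cos_monotone_0_pi) auto
  thus ?thesis using alpha_facts(5)[OF g] by (simp add: kk_def)
qed

lemma tan_sq: assumes g: "g \<ge> 2" shows "(tan (alpha g))^2 = (kk g)^2 - 1"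
proof -
  have c: "cos (alpha g) \<noteq> 0" using alpha_facts(5)[OF g] by simp
  show ?thesis unfolding kk_def tan_def using c sin_squared_eq[of "alpha g"]
    by (simp add: field_simps power_divide)
qed

lemma KK_rel: assumes g: "g \<ge> 2" shows "(complex_of_real (kk g))^2 * (om g + cnj (om g)) = 2"
proof -
  have "om g + cnj (om g) = complex_of_real (2 * cos (dd g))"
    by (simp add: om_def cis_cnj complex_eq_iff)
  moreover have "(kk g)^2 * (2 * cos (dd g)) = 2"
  proof -
    have "cos (dd g) = (cos (alpha g))^2" using alpha_facts(6)[OF g] by simp
    also have "\<dots> > 0" using alpha_facts(5)[OF g] by simp
    finally have "cos (dd g) > 0" .
    thus ?thesis using alpha_facts(5,6)[OF g] by (simp add: kk_def power_divide)
  qed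
  ultimately show ?thesis by (metis of_real_mult of_real_numeral of_real_power)
qed

lemma Kc_rel: assumes g: "g \<ge> 2" shows "complex_of_real (kk g) * (ec g + cnj (ec g)) = 2"
proof -
  have "ec g + cnj (ec g) = complex_of_real (2 * cos (alpha g))"
    by (simp add: ec_def cis_cnj complex_eq_iff)
  moreover have "kk g * (2 * cos (alpha g)) = 2"
    using alpha_facts(5)[OF g] by (simp add: kk_def)
  ultimately show ?thesis by (metis of_real_mult of_real_numeral)
qed

lemma cis_cnj_mult: "cis x * cnj (cis x) = 1" by (simp add: cis_cnj cis_mult)

lemma four_g: "real (4 * g) * dd g = pi + 2 * dd g" if g: "g \<ge> 2"
proof -
  have N: "real_of_int (NN g) = 8 * real g - 4" by (simp add: NN_def)
  have "real_of_int (NN g) > 0" using NN_ge[OF g] by simp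
  hence "8 * real g - 4 > 0" using N by simp
  thus ?thesis unfolding dd_def N by (simp add: field_simps)
qed

lemma mid_sigma: assumes g: "g \<ge> 2"
  shows "mid g (sigma g m) = (if odd m then pi + 2 * dd g else 2 * dd g) - mid g m"
proof -
  have "real_of_int (4 * int g - m) * dd g = real (4*g) * dd g - real_of_int m * dd g"
    by (simp add: algebra_simps)
  thus ?thesis using four_g[OF g] by (simp add: sigma_def mid_dd algebra_simps)
qed

lemma cis_sum_sigma: assumes g: "g \<ge> 2"
  shows "cis (mid g m + mid g (sigma g m)) = epsi m * (om g)^2"
  using mid_sigma[OF g, of m] by (simp add: epsi_def om_def DeMoivre cis_mult[symmetric] mult.commute)

lemma cis_sigma: assumes g: "g \<ge> 2"
  shows "cis (mid g (sigma g m)) = epsi m * (om g)^2 * cnj (cis (mid g m))"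
proof -
  have "cis (mid g (sigma g m)) = cis (mid g m + mid g (sigma g m)) * cnj (cis (mid g m))"
    by (simp add: cis_cnj cis_mult)
  thus ?thesis using cis_sum_sigma[OF g] by simp
qed

lemma ctr_eq: "ctr g m = complex_of_real (kk g) * cis (mid g m)"
  by (simp add: ctr_def kk_def)

lemma norm_ctr: assumes g: "g \<ge> 2" shows "norm (ctr g m) = kk g"
  using kk_gt1[OF g] by (simp add: ctr_eq norm_mult)

lemma Tm_Mob: assumes g: "g \<ge> 2" and z: "z \<noteq> ctr g m"
  shows "Tm g m z = Mob (cis (mid g m + mid g (sigma g m))) (ctr g m) z"
proof -
  have cc: "cnj (ctr g m) * ctr g m = complex_of_real ((kk g)^2)"
    by (simp add: ctr_eq cis_cnj cis_mult power2_eq_square)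
  have t: "complex_of_real ((tan (alpha g))\<^sup>2) = complex_of_real ((kk g)^2) - 1"
    using tan_sq[OF g] by simp
  have zc: "z - ctr g m \<noteq> 0" using z by simp
  show ?thesis unfolding Tm_def Mob_def t using zc cc
    by (simp add: field_simps)
qed

lemma Tm_M3: assumes g: "g \<ge> 2" and z: "z \<noteq> ctr g m"
  shows "Tm g m z = M3 (epsi m * (om g)^2) (complex_of_real (kk g) * cis (mid g m))
     (complex_of_real (kk g) * cnj (cis (mid g m))) z"
  unfolding Tm_Mob[OF g z] Mob_def M3_def cis_sum_sigma[OF g] by (simp add: ctr_eq)

lemma unit_not_ctr: assumes g: "g \<ge> 2" "norm z = 1" shows "z \<noteq> ctr g m"
  using norm_ctr[OF g(1), of m] kk_gt1[OF g(1)] g(2) by auto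

lemma Tm_unit: assumes g: "g \<ge> 2" and z: "norm z = 1" shows "norm (Tm g m z) = 1"
  unfolding Tm_Mob[OF g unit_not_ctr[OF g z]]
  by (rule Mob_unit) (auto simp: norm_ctr[OF g] kk_gt1[OF g] z)

lemma Tm_arc: assumes g: "g \<ge> 2" and u: "norm a = 1" "norm z = 1" "norm b = 1"
  and zz: "z \<in> arc_open a b"
  shows "Tm g m z \<in> arc_open (Tm g m a) (Tm g m b)"
  unfolding Tm_Mob[OF g unit_not_ctr[OF g u(1)]] Tm_Mob[OF g unit_not_ctr[OF g u(2)]]
    Tm_Mob[OF g unit_not_ctr[OF g u(3)]]
  by (rule Mob_arc[OF _ _ u zz]) (auto simp: norm_ctr[OF g] kk_gt1[OF g])



lemma mid_shift: "mid g (k + l) = mid g k + real_of_int l * dd g"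
  by (simp add: mid_dd algebra_simps)

lemma unit_cis: "norm (cis x) = 1" by simp

lemma Qt_unit: "norm (Qt g m) = 1" and Pt_unit: "norm (Pt g m) = 1"
  by (simp_all add: Qt_def Pt_def)

lemma Qt_form: "Qt g m = cis (mid g m) * cnj (om g) * ec g"
  by (simp add: Qt_def om_def ec_def cis_cnj cis_mult mid_dd algebra_simps)

lemma Pt_form: "Pt g (m + 1) = cis (mid g m) * om g * cnj (ec g)"
  by (simp add: Pt_def om_def ec_def cis_cnj cis_mult mid_dd algebra_simps)

lemma epsi_real: "cnj (epsi m) = epsi m" by (simp add: epsi_def)

lemma TQ: assumes g: "g \<ge> 2" shows "Tm g m (Qt g m) = Qt g (sigma g m + 2)"
proof -
  define u where "u = cis (mid g m)"
  have uu: "u * cnj u = 1" and oo: "om g * cnj (om g) = 1" and cc: "ec g * cnj (ec g) = 1"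
    by (simp_all add: u_def om_def ec_def cis_cnj_mult)
  have rhs: "Qt g (sigma g m + 2) = epsi m * (om g)^3 * cnj u * ec g"
  proof -
    have "Qt g (sigma g m + 2) = cis (mid g (sigma g m)) * om g * ec g"
      by (simp add: Qt_def om_def ec_def cis_mult mid_dd algebra_simps)
    thus ?thesis unfolding cis_sigma[OF g] u_def by (simp add: power_numeral_reduce)
  qed
  have ne: "Qt g m \<noteq> ctr g m" by (rule unit_not_ctr[OF g Qt_unit])
  have d1: "u * cnj (om g) * ec g - complex_of_real (kk g) * u \<noteq> 0"
    using ne by (simp add: Qt_form ctr_eq u_def)
  have "Tm g m (Qt g m) = M3 (epsi m * (om g)^2) (complex_of_real (kk g) * u)
     (complex_of_real (kk g) * cnj u) (u * cnj (om g) * ec g)"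
    unfolding Tm_M3[OF g ne] by (simp only: Qt_form u_def)
  also have "\<dots> = epsi m * (om g)^3 * cnj u * ec g"
    by (rule fix_algQ[OF uu oo KK_rel[OF g] epsi_sq cc Kc_rel[OF g] d1])
  finally show ?thesis using rhs by simp
qed

lemma TP: assumes g: "g \<ge> 2" shows "Tm g m (Pt g (m + 1)) = Pt g (sigma g m - 1)"
proof -
  define u where "u = cis (mid g m)"
  have uu: "u * cnj u = 1" and oo: "om g * cnj (om g) = 1" and cc: "ec g * cnj (ec g) = 1"
    by (simp_all add: u_def om_def ec_def cis_cnj_mult)
  have rhs: "Pt g (sigma g m - 1) = epsi m * om g * cnj u * cnj (ec g)"
  proof -
    have "Pt g (sigma g m - 1) = cis (mid g (sigma g m)) * cnj (om g) * cnj (ec g)"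
      by (simp add: Pt_def om_def ec_def cis_mult cis_cnj mid_dd algebra_simps)
    moreover have "om g * om g * cnj (om g) = om g"
      using cis_cnj_mult[of "dd g"] by (simp add: om_def)
    ultimately show ?thesis unfolding cis_sigma[OF g] u_def
      by (simp add: power2_eq_square ac_simps)
  qed
  have ne: "Pt g (m+1) \<noteq> ctr g m" by (rule unit_not_ctr[OF g Pt_unit])
  have d2: "u * om g * cnj (ec g) - complex_of_real (kk g) * u \<noteq> 0"
    using ne by (simp add: Pt_form ctr_eq u_def)
  have "Tm g m (Pt g (m+1)) = M3 (epsi m * (om g)^2) (complex_of_real (kk g) * u)
     (complex_of_real (kk g) * cnj u) (u * om g * cnj (ec g))"
    unfolding Tm_M3[OF g ne] by (simp only: Pt_form u_def)
  also have "\<dots> = epsi m * om g * cnj u * cnj (ec g)"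
    by (rule fix_algP[OF uu oo KK_rel[OF g] epsi_sq cc Kc_rel[OF g] d2])
  finally show ?thesis using rhs by simp
qed



lemma sigma_inv: "sigma g (sigma g m) = m"
  by (simp add: sigma_def)

lemma odd_sigma: "odd (sigma g m) = odd m"
  by (auto simp: sigma_def)

lemma epsi_sigma: "epsi (sigma g m) = epsi m"
  by (simp add: epsi_def odd_sigma)

lemma epsi_p1: "epsi (m + 1) = - epsi m" and epsi_m1: "epsi (m - 1) = - epsi m"
  by (auto simp: epsi_def)

lemma NN_even: "even (NN g)" by (simp add: NN_def)

lemma NN_dd: assumes g: "g \<ge> 2" shows "real_of_int (NN g) * dd g = 2 * pi"
  using NN_ge[OF g] by (simp add: dd_def)

lemma mid_per: assumes g: "g \<ge> 2" shows "mid g (k + NN g * n) = mid g k + 2 * pi * real_of_int n"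
proof -
  have "mid g (k + NN g * n) = mid g k + real_of_int n * (real_of_int (NN g) * dd g)"
    by (simp add: mid_dd algebra_simps)
  thus ?thesis using NN_dd[OF g] by simp
qed

lemma cis_per: "cis (x + 2 * pi * real_of_int n) = cis x"
proof -
  have "cis (x + 2 * pi * real_of_int n) = cis x * cis (2 * pi * real_of_int n)" by (simp only: cis_mult)
  moreover have "cis (2 * pi * real_of_int n) = 1" by (rule cis_multiple_2pi) simp
  ultimately show ?thesis by simp
qed

lemma Pt_per: assumes g: "g \<ge> 2" shows "Pt g (k + NN g * n) = Pt g k"
  unfolding Pt_def mid_per[OF g] using cis_per[of "mid g k - alpha g" n] by (simp add: algebra_simps)

lemma Qt_per: assumes g: "g \<ge> 2" shows "Qt g (k + NN g * n) = Qt g k"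
proof -
  have "k + NN g * n - 1 = (k - 1) + NN g * n" by simp
  thus ?thesis unfolding Qt_def using cis_per[of "mid g (k - 1) + alpha g" n]
    by (simp only: mid_per[OF g]) (simp add: algebra_simps)
qed

lemma sigma_per: "sigma g (k + NN g * n) = sigma g k - NN g * n"
proof -
  have "odd (k + NN g * n) = odd k" using NN_even[of g] by auto
  thus ?thesis by (auto simp: sigma_def)
qed

lemma Tm_per: assumes g: "g \<ge> 2" shows "Tm g (k + NN g * n) = Tm g k"
proof -
  have s: "sigma g (k + NN g * n) = sigma g k + NN g * (- n)" by (simp add: sigma_per)
  have "mid g (k + NN g * n) + mid g (sigma g (k + NN g * n)) = mid g k + mid g (sigma g k)"
    unfolding s mid_per[OF g] by simp
  moreover have "ctr g (k + NN g * n) = ctr g k"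
    using cis_per[of "mid g k" n] by (simp add: ctr_def mid_per[OF g])
  ultimately show ?thesis unfolding Tm_def[abs_def] s by (simp add: sigma_per)
qed

lemma per_int: assumes p: "\<forall>k. A (k + NN g) = A k" shows "A (k + NN g * n) = A k"
proof -
  have nat: "A (k + NN g * int m) = A k" for k m
    by (induction m) (auto simp: algebra_simps p[rule_format, of "k + NN g * int _", simplified algebra_simps])
  show ?thesis
  proof (cases "n \<ge> 0")
    case True then show ?thesis using nat[of k "nat n"] by simp
  next
    case False
    have "A k = A ((k + NN g * n) + NN g * int (nat (- n)))" using False by simp
    thus ?thesis using nat[of "k + NN g * n" "nat (-n)"] by simp
  qed
qed

lemma mod_eq_ex: "(a::int) mod N = b mod N \<Longrightarrow> \<exists>n. a = b + N * n"
  by (metis mod_eqE mult.commute)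



lemma j_rel: assumes ij: "sigma g (j + 1) mod NN g = (sigma g (i - 1) - 1) mod NN g"
  shows "\<exists>n. j = (if odd i then i + 4 * int g - 3 else i + 1 - 4 * int g) + NN g * n"
proof -
  obtain n where e0: "sigma g (j + 1) = sigma g (i - 1) - 1 + NN g * n" using mod_eq_ex[OF ij] by blast
  define M where "M = NN g * n"
  have eM: "even M" using NN_even[of g] by (simp add: M_def)
  have e: "sigma g (j + 1) = sigma g (i - 1) - 1 + M" using e0 by (simp add: M_def)
  have "j = (if odd i then i + 4 * int g - 3 else i + 1 - 4 * int g) - M"
    using e eM unfolding sigma_def by presburger
  thus ?thesis by (intro exI[of _ "- n"]) (simp add: M_def)
qed

lemma j_facts: assumes g: "g \<ge> 2" and ij: "sigma g (j + 1) mod NN g = (sigma g (i - 1) - 1) mod NN g"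
  shows "cis (mid g j) = - cis (mid g i) * cnj (om g)" "epsi j = - epsi i"
    "\<exists>n. sigma g j = sigma g i + 1 + NN g * n"
    "\<exists>n. sigma g (j + 1) + 1 = sigma g (i - 1) + NN g * n"
proof -
  obtain n where jn: "j = (if odd i then i + 4 * int g - 3 else i + 1 - 4 * int g) + NN g * n"
    using j_rel[OF ij] by blast
  have f4: "real (4 * g) * dd g = pi + 2 * dd g" by (rule four_g[OF g])
  have "mid g j = mid g (if odd i then i + 4 * int g - 3 else i + 1 - 4 * int g) + 2 * pi * real_of_int n"
    unfolding jn by (rule mid_per[OF g])
  also have "mid g (if odd i then i + 4 * int g - 3 else i + 1 - 4 * int g)
      = (if odd i then mid g i + pi - dd g else mid g i + pi - dd g - 2 * pi)"
    using f4 by (auto simp: mid_dd algebra_simps)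
  finally have mj: "mid g j = mid g i + pi - dd g + 2 * pi * real_of_int (if odd i then n else n - 1)"
    by (auto simp: algebra_simps)
  have "cis (mid g j) = cis (mid g i + pi - dd g)"
    unfolding mj by (rule cis_per)
  also have "\<dots> = cis (mid g i) * cis pi * cis (- dd g)"
    by (simp only: cis_mult) (simp add: algebra_simps)
  also have "\<dots> = - cis (mid g i) * cnj (om g)"
    by (simp add: om_def cis_cnj)
  finally show "cis (mid g j) = - cis (mid g i) * cnj (om g)" .
  have "odd j = even i" using jn NN_even[of g] by auto
  thus "epsi j = - epsi i" by (auto simp: epsi_def)
  define M where "M = NN g * n"
  have jM: "j = (if odd i then i + 4 * int g - 3 else i + 1 - 4 * int g) + M" using jn by (simp add: M_def)
  have eM: "even M" using NN_even[of g] by (simp add: M_def)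
  have "sigma g j = sigma g i + 1 + NN g * (if odd i then - n - 1 else 1 - n)"
  proof -
    have "sigma g j = sigma g i + 1 + (if odd i then - M - NN g else NN g - M)"
      using jM eM unfolding sigma_def NN_def by presburger
    thus ?thesis by (auto simp: M_def algebra_simps)
  qed
  thus "\<exists>n. sigma g j = sigma g i + 1 + NN g * n" by blast
  obtain m where "sigma g (j + 1) = sigma g (i - 1) - 1 + NN g * m" using mod_eq_ex[OF ij] by blast
  thus "\<exists>n. sigma g (j + 1) + 1 = sigma g (i - 1) + NN g * n" by (intro exI[of _ m]) simp
qed



lemma Tm_M3_eq: assumes g: "g \<ge> 2" and z: "norm z = 1" and E: "epsi m = E"
  and C: "cis (mid g m) = C" and Cb: "cnj C = Cb"
  shows "Tm g m z = M3 (E * (om g)^2) (complex_of_real (kk g) * C) (complex_of_real (kk g) * Cb) z"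
  using Tm_M3[OF g unit_not_ctr[OF g z], of m] E C Cb by simp

lemma ctr_eq2: assumes "cis (mid g m) = C" shows "ctr g m = complex_of_real (kk g) * C"
  using assms by (simp add: ctr_eq)

lemma group_rel: assumes g: "g \<ge> 2" and ij: "sigma g (j + 1) mod NN g = (sigma g (i - 1) - 1) mod NN g"
  and w: "norm w = 1"
  shows "Tm g j (Tm g (sigma g (j + 1)) w) = Tm g i (Tm g (sigma g (i - 1)) w)"
proof -
  define u where "u = cis (mid g i)"
  define Om where "Om = om g"
  define eps where "eps = epsi i"
  define K where "K = complex_of_real (kk g)"
  have uu: "u * cnj u = 1" and oo: "Om * cnj Om = 1" by (simp_all add: u_def Om_def om_def cis_cnj_mult)
  have er: "cnj eps = eps" by (simp add: eps_def epsi_real)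
  note jf = j_facts[OF g ij]
  have cj: "cis (mid g j) = - u * cnj Om" using jf(1) by (simp add: u_def Om_def)
  have cj1: "cis (mid g (j + 1)) = - u"
  proof -
    have "cis (mid g (j + 1)) = cis (mid g j) * Om" by (simp add: mid_shift Om_def om_def cis_mult)
    thus ?thesis using cj oo by (simp add: algebra_simps)
  qed
  have ci1: "cis (mid g (i - 1)) = u * cnj Om"
  proof -
    have "mid g (i - 1) = mid g i + - dd g" by (simp add: mid_dd algebra_simps)
    hence "cis (mid g (i - 1)) = cis (mid g i) * cis (- dd g)" by (simp only: cis_mult)
    thus ?thesis by (simp add: u_def Om_def om_def cis_cnj)
  qed
  have csj1: "cis (mid g (sigma g (j + 1))) = - eps * Om^2 * cnj u"
    unfolding cis_sigma[OF g] cj1 epsi_p1 jf(2) by (simp add: Om_def eps_def)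
  have csi1: "cis (mid g (sigma g (i - 1))) = - eps * Om^3 * cnj u"
    unfolding cis_sigma[OF g] ci1 epsi_m1 by (simp add: Om_def eps_def power_numeral_reduce oo ac_simps)
  have Es1: "epsi (sigma g (j + 1)) = eps" by (simp add: epsi_sigma epsi_p1 jf(2) eps_def)
  have Ej: "epsi j = - eps" by (simp add: jf(2) eps_def)
  have Esi: "epsi (sigma g (i - 1)) = - eps" by (simp add: epsi_sigma epsi_m1 eps_def)
  have b1: "cnj (- eps * Om^2 * cnj u) = - eps * (cnj Om)^2 * u" by (simp add: er)
  have b2: "cnj (- u * cnj Om) = - cnj u * Om" by simp
  have b3: "cnj (- eps * Om^3 * cnj u) = - eps * (cnj Om)^3 * u" by (simp add: er)
  have wj: "norm (Tm g (sigma g (j + 1)) w) = 1" by (rule Tm_unit[OF g w])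
  have wi: "norm (Tm g (sigma g (i - 1)) w) = 1" by (rule Tm_unit[OF g w])
  have T1: "Tm g (sigma g (j + 1)) w = M3 (eps * Om^2) (K * (- eps * Om^2 * cnj u)) (K * (- eps * (cnj Om)^2 * u)) w"
    unfolding Om_def K_def by (rule Tm_M3_eq[OF g w Es1 csj1[unfolded Om_def] b1[unfolded Om_def]])
  have T2: "Tm g j (Tm g (sigma g (j + 1)) w) = M3 (- eps * Om^2) (K * (- u * cnj Om)) (K * (- cnj u * Om)) (Tm g (sigma g (j + 1)) w)"
    unfolding Om_def K_def by (rule Tm_M3_eq[OF g wj Ej cj[unfolded Om_def] b2[unfolded Om_def]])
  have T3: "Tm g (sigma g (i - 1)) w = M3 (- eps * Om^2) (K * (- eps * Om^3 * cnj u)) (K * (- eps * (cnj Om)^3 * u)) w"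
    unfolding Om_def K_def by (rule Tm_M3_eq[OF g w Esi csi1[unfolded Om_def] b3[unfolded Om_def]])
  have T4: "Tm g i (Tm g (sigma g (i - 1)) w) = M3 (eps * Om^2) (K * u) (K * cnj u) (Tm g (sigma g (i - 1)) w)"
    unfolding Om_def K_def eps_def by (rule Tm_M3_eq[OF g wi refl u_def[symmetric] refl])
  have d1: "w - K * (- eps * Om^2 * cnj u) \<noteq> 0"
    using unit_not_ctr[OF g w, of "sigma g (j+1)"] unfolding ctr_eq2[OF csj1[unfolded Om_def]] K_def Om_def
    by (simp only: right_minus_eq not_False_eq_True)
  have d2: "M3 (eps * Om^2) (K * (- eps * Om^2 * cnj u)) (K * (- eps * (cnj Om)^2 * u)) w - K * (- u * cnj Om) \<noteq> 0"
    using unit_not_ctr[OF g wj, of j] unfolding ctr_eq2[OF cj[unfolded Om_def]] T1 K_def Om_def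
    by (simp only: right_minus_eq not_False_eq_True)
  have d3: "w - K * (- eps * Om^3 * cnj u) \<noteq> 0"
    using unit_not_ctr[OF g w, of "sigma g (i-1)"] unfolding ctr_eq2[OF csi1[unfolded Om_def]] K_def Om_def
    by (simp only: right_minus_eq not_False_eq_True)
  have d4: "M3 (- eps * Om^2) (K * (- eps * Om^3 * cnj u)) (K * (- eps * (cnj Om)^3 * u)) w - K * u \<noteq> 0"
    using unit_not_ctr[OF g wi, of i] unfolding ctr_eq2[OF u_def[symmetric]] T3 K_def Om_def
    by (simp only: right_minus_eq not_False_eq_True)
  have KK: "K^2 * (Om + cnj Om) = 2" using KK_rel[OF g] by (simp add: K_def Om_def)
  have ee: "eps^2 = 1" by (simp add: eps_def epsi_sq)
  show ?thesis
    unfolding T2 T4 unfolding T1 T3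
    by (rule group_alg[OF uu oo KK ee d1 d2 d3 d4])
qed



lemma Bpt_per: assumes g: "g \<ge> 2" and p: "\<forall>k. A (k + NN g) = A k"
  shows "Bpt g A (l + NN g * n) = Bpt g A l"
proof -
  have e: "l + NN g * n - 1 = (l - 1) + NN g * n" by simp
  have s: "sigma g (l + NN g * n - 1) = sigma g (l - 1) + NN g * (- n)" unfolding e sigma_per by simp
  show ?thesis unfolding Bpt_def s Tm_per[OF g] per_int[OF p] ..
qed

lemma Cpt_per: assumes g: "g \<ge> 2" and p: "\<forall>k. A (k + NN g) = A k"
  shows "Cpt g A (l + NN g * n) = Cpt g A l"
proof -
  have e: "l + NN g * n + 1 = (l + 1) + NN g * n" by simp
  have s: "sigma g (l + NN g * n + 1) = sigma g (l + 1) + NN g * (- n)" unfolding e sigma_per by simp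
  have "sigma g (l + 1) + NN g * (- n) + 1 = (sigma g (l + 1) + 1) + NN g * (- n)" by simp
  thus ?thesis unfolding Cpt_def s Tm_per[OF g] by (simp only: per_int[OF p])
qed

lemma A_ang: assumes g: "g \<ge> 2" and part: "A k \<in> arc_open (Pt g k) (Qt g k)"
  shows "\<exists>t. mid g k - alpha g < t \<and> t < mid g k - dd g + alpha g \<and> A k = cis t"
proof -
  have m1: "mid g (k - 1) = mid g k - dd g" by (simp add: mid_dd algebra_simps)
  note af = alpha_facts[OF g]
  have "mid g k - alpha g < mid g k - dd g + alpha g" "mid g k - dd g + alpha g < mid g k - alpha g + 2 * pi"
    using af dd_le[OF g] by auto
  from arc_open_cis[OF this] part show ?thesis unfolding Pt_def Qt_def m1 by auto
qed



theorem corollary4p2: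
  fixes g :: nat and A :: "int \<Rightarrow> complex" and i j :: int
  assumes "g \<ge> 2"
    and periodic: "\<forall>k. A (k + NN g) = A k"
    and partition: "\<forall>k. A k \<in> arc_open (Pt g k) (Qt g k)"
    and short1: "\<forall>k. Tm g k (A k) \<in> arc_open (Qt g (rho g k)) (A (rho g k + 1))"
    and short2: "\<forall>k. Tm g (k - 1) (A k) \<in> arc_open (A (theta g (k - 1))) (Pt g (theta g (k - 1) + 1))"
    and ij: "sigma g (j + 1) mod NN g = (sigma g (i - 1) - 1) mod NN g"
  shows "Tm g j (Cpt g A j) = Tm g i (Bpt g A i)
    \<and> Tm g i (Bpt g A i) \<in> arc_closed (Bpt g A (rho g i + 1)) (Cpt g A (theta g i))
    \<and> arc_closed (Bpt g A (rho g i + 1)) (Cpt g A (theta g i))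
        = arc_closed (Bpt g A (rho g j)) (Cpt g A (theta g j - 1))"
proof -
  note g = assms(1)
  note af = alpha_facts[OF g]
  have d0: "0 < dd g" and d6: "dd g \<le> pi / 6" using dd_pos[OF g] dd_le[OF g] .
  note jf = j_facts[OF g ij]
  have Au: "norm (A k) = 1" for k
  proof -
    obtain t where "A k = cis t" using A_ang[where A=A and k=k, OF g partition[rule_format, of k]] by blast
    thus ?thesis by simp
  qed
  have B_in: "Bpt g A l \<in> arc_open (Qt g l) (A (l + 1))" for l
  proof -
    have "rho g (sigma g (l - 1)) = l" by (simp add: rho_def sigma_inv)
    thus ?thesis using short1[rule_format, of "sigma g (l - 1)"] by (simp add: Bpt_def)
  qed
  have C_in: "Cpt g A l \<in> arc_open (A l) (Pt g (l + 1))" for l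
  proof -
    have "theta g (sigma g (l + 1) + 1 - 1) = l" by (simp add: theta_def sigma_inv)
    thus ?thesis using short2[rule_format, of "sigma g (l + 1) + 1"] by (simp add: Cpt_def)
  qed
  have Bu: "norm (Bpt g A l) = 1" for l unfolding Bpt_def by (rule Tm_unit[OF g Au])
  have Cu: "norm (Cpt g A l) = 1" for l unfolding Cpt_def by (rule Tm_unit[OF g Au])
  obtain n1 where n1: "sigma g (j + 1) + 1 = sigma g (i - 1) + NN g * n1" using jf(4) by blast
  obtain n2 where n2: "sigma g j = sigma g i + 1 + NN g * n2" using jf(3) by blast
  have P1: "Tm g j (Cpt g A j) = Tm g i (Bpt g A i)"
  proof -
    have "A (sigma g (j + 1) + 1) = A (sigma g (i - 1))" unfolding n1 by (rule per_int[OF periodic])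
    thus ?thesis unfolding Cpt_def Bpt_def using group_rel[OF g ij Au] by simp
  qed
  define s where "s = sigma g i"
  define x where "x = Tm g i (Bpt g A i)"
  define B where "B = Bpt g A (rho g i + 1)"
  define C where "C = Cpt g A (theta g i)"
  have Bj: "Bpt g A (rho g j) = B"
  proof -
    have "rho g j = (rho g i + 1) + NN g * n2" using n2 by (simp add: rho_def)
    thus ?thesis unfolding B_def using Bpt_per[OF g periodic] by simp
  qed
  have Cj: "Cpt g A (theta g j - 1) = C"
  proof -
    have "theta g j - 1 = theta g i + NN g * n2" using n2 by (simp add: theta_def)
    thus ?thesis unfolding C_def using Cpt_per[OF g periodic] by simp
  qed
  have x1: "x \<in> arc_open (Qt g (s + 2)) C"
  proof -
    have "x \<in> arc_open (Tm g i (Qt g i)) (Tm g i (A (i + 1)))"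
      unfolding x_def by (rule Tm_arc[OF g Qt_unit Bu Au B_in])
    moreover have "Tm g i (A (i + 1)) = C"
      unfolding C_def Cpt_def by (simp add: theta_def sigma_inv)
    ultimately show ?thesis by (simp add: TQ[OF g] s_def)
  qed
  have x2: "x \<in> arc_open B (Pt g s)"
  proof -
    have "x = Tm g j (Cpt g A j)" using P1 by (simp add: x_def)
    hence "x \<in> arc_open (Tm g j (A j)) (Tm g j (Pt g (j + 1)))"
      using Tm_arc[OF g Au Cu Pt_unit C_in] by simp
    moreover have "Tm g j (A j) = Bpt g A (rho g j)"
      unfolding Bpt_def by (simp add: rho_def sigma_inv)
    moreover have "Tm g j (Pt g (j + 1)) = Pt g s"
      unfolding TP[OF g] n2 s_def using Pt_per[OF g] by simp
    ultimately show ?thesis using Bj by simp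
  qed
  have B_arc: "B \<in> arc_open (Qt g (s + 2)) (A (s + 3))"
  proof -
    have e: "rho g i + 1 = s + 2" by (simp add: rho_def s_def)
    have e2: "s + 2 + 1 = s + 3" by simp
    show ?thesis using B_in[of "s + 2"] unfolding B_def e e2 .
  qed
  have C_arc: "C \<in> arc_open (A (s - 1)) (Pt g s)"
  proof -
    have e: "theta g i = s - 1" by (simp add: theta_def s_def)
    show ?thesis using C_in[of "theta g i"] unfolding C_def e by simp
  qed
  define m0 where "m0 = mid g s"
  define d where "d = dd g"
  define al where "al = alpha g"
  have ad: "d / 2 < al" "al < d" "0 < d" "d \<le> pi / 6"
    using af d0 d6 by (auto simp: d_def al_def)
  obtain t3 where t3: "m0 + 3 * d - al < t3" "t3 < m0 + 2 * d + al" "A (s + 3) = cis t3"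
  proof -
    from A_ang[where A=A and k="s + 3", OF g partition[rule_format, of "s + 3"]] obtain t where
      "mid g (s + 3) - alpha g < t" "t < mid g (s + 3) - dd g + alpha g" "A (s + 3) = cis t" by blast
    moreover have "mid g (s + 3) = m0 + 3 * d" by (simp add: m0_def d_def mid_shift)
    ultimately show ?thesis using that by (auto simp: al_def d_def)
  qed
  obtain t1 where t1: "m0 - d - al < t1" "t1 < m0 - 2 * d + al" "A (s - 1) = cis t1"
  proof -
    from A_ang[where A=A and k="s - 1", OF g partition[rule_format, of "s - 1"]] obtain t where
      "mid g (s - 1) - alpha g < t" "t < mid g (s - 1) - dd g + alpha g" "A (s - 1) = cis t" by blast
    moreover have "mid g (s - 1) = m0 - d" by (simp add: m0_def d_def mid_dd algebra_simps)
    ultimately show ?thesis using that by (auto simp: al_def d_def)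
  qed
  define y where "y = m0 + d + al"
  define p where "p = m0 - al + 2 * pi"
  have Qy: "Qt g (s + 2) = cis y"
  proof -
    have "mid g (s + 2 - 1) = m0 + d" by (simp add: m0_def d_def mid_dd algebra_simps)
    thus ?thesis by (simp add: Qt_def y_def al_def)
  qed
  have Pp: "Pt g s = cis p"
  proof -
    have "cis (m0 - al + 2 * pi) = cis (m0 - al)" by (simp add: cis_mult[symmetric])
    thus ?thesis by (simp add: Pt_def p_def m0_def al_def)
  qed
  have A1: "A (s - 1) = cis (t1 + 2 * pi)" using t1(3) by (simp add: cis_mult[symmetric])
  obtain b where b: "y < b" "b < t3" "B = cis b"
    using B_arc unfolding Qy t3(3) using arc_open_cis[of y t3 B] ad t3 by (auto simp: y_def)
  obtain c where c: "t1 + 2 * pi < c" "c < p" "C = cis c"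
    using C_arc unfolding Pp A1 using arc_open_cis[of "t1 + 2 * pi" p C] ad t1 by (auto simp: p_def)
  obtain u where u: "y < u" "u < c" "x = cis u"
    using x1 unfolding Qy c(3) using arc_open_cis[of y c x] ad t1 c by (auto simp: y_def p_def)
  obtain v where v: "b < v" "v < p" "x = cis v"
    using x2 unfolding Pp b(3) using arc_open_cis[of b p x] ad t3 b by (auto simp: y_def p_def)
  have "u = v" using cis_inj[of u v] u v b c ad by (auto simp: p_def y_def)
  have bc: "b < c" "c < b + 2 * pi" using b c ad t1 t3 by (auto simp: p_def y_def)
  have P2: "x \<in> arc_closed B C"
    unfolding b(3) c(3) arc_closed_cis[OF bc] using u v \<open>u = v\<close> by (intro exI[of _ v]) auto
  show ?thesis using P1 P2 Bj Cj by (simp add: x_def B_def C_def)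
qed

end
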